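(* Let $\mu$ be a probability measure on $\mathbb{R}^d$ absolutely continuous with respect to Lebesgue measure and $n\ge1$. The assignment \[ F(\mathbb{R}^d,n)\times\mathcal{K}^d\longrightarrow W_n,\qquad (x,K)\longmapsto w_K(x), \] is continuous and $S_n$-equivariant, where $S_n$ acts trivially on the $\mathcal{K}^d$-coordinate of the domain.
   Context: $\mathcal{K}^d$ is the set of compact convex subsets of $\mathbb{R}^d$ with nonempty interior, with the Hausdorff metric $d_H(X,Y)=\max\{\sup_{x\in X}\mathrm{dist}(x,Y),\sup_{y\in Y}\mathrm{dist}(y,X)\}$. $F(\mathbb{R}^d,n)$ is the space of $n$-tuples of pairwise distinct points of $\mathbb{R}^d$ and $W_n=\{w\in\mathbb{R}^n:\sum w_i=0\}$; $S_n$ acts on both by permuting coordinates, $\sigma\cdot(x_1,\dots,x_n)=(x_{\sigma^{-1}(1)},\dots,x_{\sigma^{-1}(n)})$. For $x\in F(\mathbb{R}^d,n)$, $w\in\mathbb{R}^n$, the generalised Voronoi cells are $C_i(x,w)=\{p\in\mathbb{R}^d:\|p-x_i\|^2-w_i\le\|p-x_j\|^2-w_j\text{ for all }1\le j\le n\}$. Standing fact (from the literature): for every $K\in\mathcal{K}^d$ and $x\in F(\mathbb{R}^d,n)$ there are unique weights $w_K(x)\in W_n$ such that the sets $K\cap C_i(x,w_K(x))$, $1\le i\le n$, are convex bodies with equal $\mu$-measure. *)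

theory Defs
  imports "HOL-Probability.Probability"
begin

definition convex_body :: "'a::euclidean_space set \<Rightarrow> bool" where
  "convex_body K \<longleftrightarrow> compact K \<and> convex K \<and> interior K \<noteq> {}"

definition hausdorff_dist :: "'a::euclidean_space set \<Rightarrow> 'a set \<Rightarrow> real" where
  "hausdorff_dist X Y = max (SUP x\<in>X. setdist {x} Y) (SUP y\<in>Y. setdist {y} X)"

text \<open>Configuration space of n = CARD('n) pairwise distinct points.\<close>
definition conf_space :: "('a::euclidean_space ^ 'n::finite) set" where
  "conf_space = {x. \<forall>i j. i \<noteq> j \<longrightarrow> x $ i \<noteq> x $ j}"

definition W_space :: "(real ^ 'n::finite) set" where
  "W_space = {w. (\<Sum>i\<in>UNIV. w $ i) = 0}"

definition voronoi_cell :: "'a::euclidean_space ^ 'n::finite \<Rightarrow> real ^ 'n \<Rightarrow> 'n \<Rightarrow> 'a set" where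
  "voronoi_cell x w i = {p. \<forall>j. (norm (p - x $ i))\<^sup>2 - w $ i \<le> (norm (p - x $ j))\<^sup>2 - w $ j}"

definition equipartition_weight :: "'a::euclidean_space measure \<Rightarrow> 'a set \<Rightarrow> 'a ^ 'n::finite \<Rightarrow> real ^ 'n \<Rightarrow> bool" where
  "equipartition_weight \<mu> K x w \<longleftrightarrow> w \<in> W_space \<and>
     (\<forall>i. convex_body (K \<inter> voronoi_cell x w i)) \<and>
     (\<forall>i j. measure \<mu> (K \<inter> voronoi_cell x w i) = measure \<mu> (K \<inter> voronoi_cell x w j))"

definition wK :: "'a::euclidean_space measure \<Rightarrow> 'a set \<Rightarrow> 'a ^ 'n::finite \<Rightarrow> real ^ 'n" where
  "wK \<mu> K x = (THE w. equipartition_weight \<mu> K x w)"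

definition perm_act :: "('n::finite \<Rightarrow> 'n) \<Rightarrow> 'b ^ 'n \<Rightarrow> 'b ^ 'n" where
  "perm_act \<sigma> x = (\<chi> i. x $ (inv \<sigma> i))"

end

theory Submission
  imports Defs
begin


lemma sq_diff_affine:
  fixes p a b :: "'a::real_inner"
  shows "(norm (p - a))\<^sup>2 - (norm (p - b))\<^sup>2 = inner (2 *\<^sub>R (b - a)) p + (inner a a - inner b b)"
  by (simp add: power2_norm_eq_inner inner_diff_left inner_diff_right inner_commute algebra_simps)

lemma voronoi_halfspaces:
  "voronoi_cell x w i = (\<Inter>j. {p. inner (2 *\<^sub>R (x$j - x$i)) p \<le> w$i - w$j - (inner (x$i) (x$i) - inner (x$j) (x$j))})"
  unfolding voronoi_cell_def
proof (intro set_eqI iffI; clarsimp)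
  fix p j assume "\<forall>j. (norm (p - x $ i))\<^sup>2 - w $ i \<le> (norm (p - x $ j))\<^sup>2 - w $ j"
  then have "(norm (p - x $ i))\<^sup>2 - (norm (p - x $ j))\<^sup>2 \<le> w$i - w$j" by (metis diff_le_eq diff_diff_eq2 le_diff_eq add.commute)
  then show "2 * inner (x $ j - x $ i) p \<le> w $ i - w $ j - (inner (x $ i) (x $ i) - inner (x $ j) (x $ j))"
    using sq_diff_affine[of p "x$i" "x$j"] by simp
next
  fix p j assume "\<forall>j. 2 * inner (x $ j - x $ i) p \<le> w $ i - w $ j - (inner (x $ i) (x $ i) - inner (x $ j) (x $ j))"
  then have "2 * inner (x $ j - x $ i) p \<le> w $ i - w $ j - (inner (x $ i) (x $ i) - inner (x $ j) (x $ j))" by blast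
  then show "(norm (p - x $ i))\<^sup>2 - w $ i \<le> (norm (p - x $ j))\<^sup>2 - w $ j"
    using sq_diff_affine[of p "x$i" "x$j"] by simp
qed

lemma closed_voronoi: "closed (voronoi_cell x w i)"
  unfolding voronoi_halfspaces by (rule closed_INT, rule ballI, rule closed_halfspace_le)

lemma convex_voronoi: "convex (voronoi_cell x w i)"
  unfolding voronoi_halfspaces by (rule convex_INT, rule convex_halfspace_le)

definition hyp :: "'a::euclidean_space ^ 'n::finite \<Rightarrow> real ^ 'n \<Rightarrow> 'n \<Rightarrow> 'n \<Rightarrow> 'a set" where
  "hyp x w i j = {p. (norm (p - x $ i))\<^sup>2 - w $ i = (norm (p - x $ j))\<^sup>2 - w $ j}"

definition strict_cell :: "'a::euclidean_space ^ 'n::finite \<Rightarrow> real ^ 'n \<Rightarrow> 'n \<Rightarrow> 'a set" where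
  "strict_cell x w i = {p. \<forall>j. j \<noteq> i \<longrightarrow> (norm (p - x $ i))\<^sup>2 - w $ i < (norm (p - x $ j))\<^sup>2 - w $ j}"

lemma hyp_eq: "hyp x w i j = {p. inner (2 *\<^sub>R (x$j - x$i)) p = w$i - w$j - (inner (x$i) (x$i) - inner (x$j) (x$j))}"
proof -
  have "\<And>p. (norm (p - x $ i))\<^sup>2 - w $ i = (norm (p - x $ j))\<^sup>2 - w $ j \<longleftrightarrow>
     inner (2 *\<^sub>R (x$j - x$i)) p = w$i - w$j - (inner (x$i) (x$i) - inner (x$j) (x$j))"
  proof -
    fix p show "?thesis p" using sq_diff_affine[of p "x$i" "x$j"] by (auto simp: algebra_simps)
  qed
  then show ?thesis unfolding hyp_def by auto
qed

lemma closed_hyp: "closed (hyp x w i j)"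
  unfolding hyp_def by (intro closed_Collect_eq continuous_intros)

lemma negligible_hyp: "x \<in> conf_space \<Longrightarrow> i \<noteq> j \<Longrightarrow> negligible (hyp x w i j)"
  unfolding hyp_eq conf_space_def by (intro negligible_hyperplane) auto

lemma open_strict_cell: "open (strict_cell x w i)"
proof -
  have "strict_cell x w i = (\<Inter>j\<in>UNIV - {i}. {p. (norm (p - x $ i))\<^sup>2 - w $ i < (norm (p - x $ j))\<^sup>2 - w $ j})"
    unfolding strict_cell_def by auto
  also have "open \<dots>" by (intro open_INT finite_Diff ballI open_Collect_less continuous_intros) auto
  finally show ?thesis .
qed

lemma strict_sub: "strict_cell x w i \<subseteq> voronoi_cell x w i"
  unfolding strict_cell_def voronoi_cell_def by (auto simp: less_imp_le)

lemma cell_minus_strict: "voronoi_cell x w i - strict_cell x w i \<subseteq> (\<Union>j\<in>UNIV-{i}. hyp x w i j)"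
proof
  fix p assume "p \<in> voronoi_cell x w i - strict_cell x w i"
  then have v: "\<forall>j. (norm (p - x $ i))\<^sup>2 - w $ i \<le> (norm (p - x $ j))\<^sup>2 - w $ j"
    and "\<exists>j. j \<noteq> i \<and> \<not> (norm (p - x $ i))\<^sup>2 - w $ i < (norm (p - x $ j))\<^sup>2 - w $ j"
    unfolding strict_cell_def voronoi_cell_def by auto
  then obtain j where "j \<noteq> i" "\<not> (norm (p - x $ i))\<^sup>2 - w $ i < (norm (p - x $ j))\<^sup>2 - w $ j"
    by blast
  moreover have "(norm (p - x $ i))\<^sup>2 - w $ i \<le> (norm (p - x $ j))\<^sup>2 - w $ j" using v by blast
  ultimately have "p \<in> hyp x w i j" unfolding hyp_def by auto
  with \<open>j \<noteq> i\<close> show "p \<in> (\<Union>j\<in>UNIV-{i}. hyp x w i j)" by blast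
qed



lemma null_from_negligible:
  assumes "absolutely_continuous lborel \<mu>" "S \<in> sets borel" "negligible S"
  shows "S \<in> null_sets \<mu>"
proof -
  have "S \<in> null_sets lebesgue" using assms(3) negligible_iff_null_sets by blast
  hence "S \<in> null_sets lborel" using null_sets_completion_iff[of S lborel] assms(2) by simp
  thus ?thesis using assms(1) unfolding absolutely_continuous_def by blast
qed

lemma pos_measure_interior:
  fixes A :: "'a::euclidean_space set"
  assumes "absolutely_continuous lborel \<mu>" "convex A" "closed A" "measure \<mu> A > 0"
  shows "interior A \<noteq> {}"
proof
  assume "interior A = {}"
  hence "negligible A" using negligible_convex_interior assms(2) by blast
  hence "A \<in> null_sets \<mu>" using null_from_negligible[OF assms(1) borel_closed[OF assms(3)]] by blast
  hence "measure \<mu> A = 0" by (simp add: measure_def null_sets_def)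
  thus False using assms(4) by simp
qed

lemma bdd_setdist:
  fixes L K :: "'a::euclidean_space set"
  assumes "bounded L" "K \<noteq> {}"
  shows "bdd_above ((\<lambda>q. setdist {q} K) ` L)"
proof -
  obtain k0 where k0: "k0 \<in> K" using assms(2) by blast
  obtain B where B: "\<forall>q\<in>L. norm q \<le> B" using assms(1) bounded_iff by blast
  have "setdist {q} K \<le> B + norm k0" if "q \<in> L" for q
  proof -
    have "setdist {q} K \<le> dist q k0" by (rule setdist_le_dist) (use k0 in auto)
    also have "\<dots> \<le> norm q + norm k0" by (simp add: dist_norm norm_triangle_ineq4)
    finally show ?thesis using B that by force
  qed
  thus ?thesis by (intro bdd_aboveI2) 
qed

lemma hd_upper1:
  fixes L K :: "'a::euclidean_space set"
  assumes "bounded L" "K \<noteq> {}" "q \<in> L"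
  shows "setdist {q} K \<le> hausdorff_dist L K"
  unfolding hausdorff_dist_def
  by (rule order_trans[OF cSUP_upper[OF assms(3) bdd_setdist[OF assms(1,2)]] max.cobounded1])

lemma hd_upper2:
  fixes L K :: "'a::euclidean_space set"
  assumes "bounded K" "L \<noteq> {}" "y \<in> K"
  shows "setdist {y} L \<le> hausdorff_dist L K"
  unfolding hausdorff_dist_def
  by (rule order_trans[OF cSUP_upper[OF assms(3) bdd_setdist[OF assms(1,2)]] max.cobounded2])

lemma hd_outside:
  fixes K :: "'a::euclidean_space set"
  assumes "closed K" "K \<noteq> {}" "p \<notin> K"
  shows "\<exists>c>0. \<forall>L. bounded L \<longrightarrow> hausdorff_dist L K < c \<longrightarrow> p \<notin> L"
proof (intro exI conjI allI impI)
  show "setdist {p} K > 0" using setdist_eq_0_closed[OF assms(1), of p] assms setdist_pos_le[of "{p}" K]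
    by linarith
  fix L :: "'a set" assume "bounded L" "hausdorff_dist L K < setdist {p} K"
  then show "p \<notin> L" using hd_upper1[of L K p] assms(2) by force
qed

lemma hd_close:
  fixes K L :: "'a::euclidean_space set"
  assumes "bounded L" "K \<noteq> {}" "q \<in> L" "hausdorff_dist L K < c"
  shows "\<exists>k\<in>K. dist q k < c"
proof (rule ccontr)
  assume "\<not> ?thesis"
  hence "c \<le> setdist {q} K" using assms(2) by (auto simp: le_setdist_iff not_less)
  thus False using hd_upper1[OF assms(1-3)] assms(4) by linarith
qed

lemma hd_inside:
  fixes K L :: "'a::euclidean_space set"
  assumes "ball p r \<subseteq> K" "bounded K" "convex L" "closed L" "L \<noteq> {}" "hausdorff_dist L K < r" "K \<noteq> {}"
  shows "p \<in> L"
proof (rule ccontr)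
  assume pL: "p \<notin> L"
  obtain a b where ab: "inner a p < b" "\<forall>q\<in>L. inner a q > b"
    using separating_hyperplane_closed_point[OF assms(3,4) pL] by blast
  have a0: "a \<noteq> 0" using ab assms(5) by auto
  define u where "u = a /\<^sub>R norm a"
  have nu: "norm u = 1" using a0 by (simp add: u_def)
  have sep: "inner u p < inner u q" if "q \<in> L" for q
  proof -
    have "inner a p < inner a q" using ab that by force
    thus ?thesis using a0 by (simp add: u_def divide_strict_right_mono)
  qed
  obtain t where t: "hausdorff_dist L K < t" "t < r" using assms(6) dense by blast
  obtain k where "k \<in> K" using assms(7) by blast
  have t0: "t > 0" using t(1) hd_upper2[OF assms(2,5) \<open>k \<in> K\<close>] setdist_pos_le[of "{k}" L] by linarith
  define y where "y = p - t *\<^sub>R u"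
  have "y \<in> ball p r" using t t0 nu by (simp add: y_def dist_norm)
  hence yK: "y \<in> K" using assms(1) by blast
  have "t \<le> dist y q" if "q \<in> L" for q
  proof -
    have "inner u (q - y) = inner u q - inner u p + t" using nu
      by (simp add: y_def inner_diff_right power2_norm_eq_inner[symmetric])
    also have "\<dots> > t" using sep[OF that] by simp
    finally have "t < inner u (q - y)" .
    also have "\<dots> \<le> norm u * norm (q - y)" by (rule norm_cauchy_schwarz)
    finally show ?thesis using nu by (simp add: dist_norm norm_minus_commute)
  qed
  hence "t \<le> setdist {y} L" using assms(5) by (auto simp: le_setdist_iff)
  thus False using hd_upper2[OF assms(2,5) yK] t by linarith
qed



lemma negligible_hyps: "x \<in> conf_space \<Longrightarrow> negligible (\<Union>j\<in>UNIV-{i}. hyp x w i j)"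
  by (rule negligible_Union) (auto intro: negligible_hyp)

lemma closed_hyps: "closed (\<Union>j\<in>UNIV-{i}. hyp x w i j)"
  by (intro closed_UN finite_Diff finite_UNIV ballI closed_hyp) auto

lemma cell_lim:
  fixes Y :: "nat \<Rightarrow> 'a::euclidean_space ^ 'n::finite"
  assumes "Y \<longlonglongrightarrow> x" "W \<longlonglongrightarrow> w"
  shows "(\<lambda>k. (norm (p - Y k $ i))\<^sup>2 - W k $ i - ((norm (p - Y k $ j))\<^sup>2 - W k $ j))
     \<longlonglongrightarrow> (norm (p - x $ i))\<^sup>2 - w $ i - ((norm (p - x $ j))\<^sup>2 - w $ j)"
  by (intro tendsto_intros assms)

lemma ev_in_cell:
  fixes Y :: "nat \<Rightarrow> 'a::euclidean_space ^ 'n::finite"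
  assumes "Y \<longlonglongrightarrow> x" "W \<longlonglongrightarrow> w" "p \<in> strict_cell x w i"
  shows "eventually (\<lambda>k. p \<in> voronoi_cell (Y k) (W k) i) sequentially"
proof -
  have "eventually (\<lambda>k. j \<noteq> i \<longrightarrow> (norm (p - Y k $ i))\<^sup>2 - W k $ i - ((norm (p - Y k $ j))\<^sup>2 - W k $ j) < 0) sequentially" for j
  proof (cases "j = i")
    case False
    have "(norm (p - x $ i))\<^sup>2 - w $ i - ((norm (p - x $ j))\<^sup>2 - w $ j) < 0"
      using assms(3) False unfolding strict_cell_def by auto
    from order_tendstoD(2)[OF cell_lim[OF assms(1,2)] this] show ?thesis
      by (rule eventually_mono) auto
  qed simp
  then have "eventually (\<lambda>k. \<forall>j. j \<noteq> i \<longrightarrow> (norm (p - Y k $ i))\<^sup>2 - W k $ i - ((norm (p - Y k $ j))\<^sup>2 - W k $ j) < 0) sequentially"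
    by (rule eventually_all_finite)
  then show ?thesis
  proof (rule eventually_mono)
    fix k assume h: "\<forall>j. j \<noteq> i \<longrightarrow> (norm (p - Y k $ i))\<^sup>2 - W k $ i - ((norm (p - Y k $ j))\<^sup>2 - W k $ j) < 0"
    show "p \<in> voronoi_cell (Y k) (W k) i"
      unfolding voronoi_cell_def
    proof (intro CollectI allI)
      fix j show "(norm (p - Y k $ i))\<^sup>2 - W k $ i \<le> (norm (p - Y k $ j))\<^sup>2 - W k $ j"
        using h[rule_format, of j] by (cases "j = i") auto
    qed
  qed
qed

lemma ev_notin_cell:
  fixes Y :: "nat \<Rightarrow> 'a::euclidean_space ^ 'n::finite"
  assumes "Y \<longlonglongrightarrow> x" "W \<longlonglongrightarrow> w" "p \<notin> voronoi_cell x w i"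
  shows "eventually (\<lambda>k. p \<notin> voronoi_cell (Y k) (W k) i) sequentially"
proof -
  obtain j where "(norm (p - x $ i))\<^sup>2 - w $ i - ((norm (p - x $ j))\<^sup>2 - w $ j) > 0"
    using assms(3) unfolding voronoi_cell_def by (auto simp: not_le)
  from order_tendstoD(1)[OF cell_lim[OF assms(1,2)] this] show ?thesis
    by (rule eventually_mono) (auto simp: voronoi_cell_def not_le intro!: exI[of _ j])
qed

lemma convex_body_bounded: "convex_body K \<Longrightarrow> bounded K"
  unfolding convex_body_def using compact_imp_bounded by blast
lemma convex_body_closed: "convex_body K \<Longrightarrow> closed K"
  unfolding convex_body_def using compact_imp_closed by blast
lemma convex_body_ne: "convex_body K \<Longrightarrow> K \<noteq> {}"
  unfolding convex_body_def using interior_subset by blast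
lemma convex_body_convex: "convex_body K \<Longrightarrow> convex K"
  unfolding convex_body_def by blast

lemma measure_conv:
  fixes \<mu> :: "'a::euclidean_space measure" and x :: "'a ^ 'n::finite"
  assumes P: "prob_space \<mu>" "sets \<mu> = sets borel" "absolutely_continuous lborel \<mu>"
    and x: "x \<in> conf_space" and K: "convex_body K"
    and L: "\<And>k. convex_body (L k)"
    and Y: "Y \<longlonglongrightarrow> x" and W: "W \<longlonglongrightarrow> w"
    and H: "\<And>c. c > 0 \<Longrightarrow> eventually (\<lambda>k. hausdorff_dist (L k) K < c) sequentially"
  shows "(\<lambda>k. measure \<mu> (L k \<inter> voronoi_cell (Y k) (W k) i)) \<longlonglongrightarrow> measure \<mu> (K \<inter> voronoi_cell x w i)"
proof -
  have sp: "space \<mu> = UNIV" using sets_eq_imp_space_eq[OF P(2)] by simp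
  define N where "N = frontier K \<union> (\<Union>j\<in>UNIV-{i}. hyp x w i j)"
  have "closed N" unfolding N_def by (intro closed_Un frontier_closed closed_hyps)
  moreover have "negligible N" unfolding N_def
    by (intro negligible_Un negligible_convex_frontier negligible_hyps x convex_body_convex K)
  ultimately have N: "N \<in> null_sets \<mu>" using null_from_negligible[OF P(3)] borel_closed by blast
  have conv: "(\<lambda>k. indicator (L k \<inter> voronoi_cell (Y k) (W k) i) p) \<longlonglongrightarrow> (indicator (K \<inter> voronoi_cell x w i) p :: real)"
    if pN: "p \<notin> N" for p
  proof (cases "p \<in> K \<inter> voronoi_cell x w i")
    case True
    have "p \<in> interior K" using True pN convex_body_closed[OF K] unfolding N_def frontier_def by auto
    then obtain r where r: "r > 0" "ball p r \<subseteq> K" by (meson mem_interior)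
    have "p \<in> strict_cell x w i" using True pN cell_minus_strict[of x w i] unfolding N_def by blast
    have "eventually (\<lambda>k. p \<in> L k) sequentially"
      using H[OF r(1)] proof (rule eventually_mono)
      fix k assume "hausdorff_dist (L k) K < r"
      then show "p \<in> L k"
        using hd_inside[OF r(2) convex_body_bounded[OF K] convex_body_convex[OF L] convex_body_closed[OF L]
          convex_body_ne[OF L] _ convex_body_ne[OF K]] by blast
    qed
    moreover have "eventually (\<lambda>k. p \<in> voronoi_cell (Y k) (W k) i) sequentially"
      by (rule ev_in_cell[OF Y W \<open>p \<in> strict_cell x w i\<close>])
    ultimately have "eventually (\<lambda>k. indicator (L k \<inter> voronoi_cell (Y k) (W k) i) p = (indicator (K \<inter> voronoi_cell x w i) p :: real)) sequentially"
      by eventually_elim (use True in auto)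
    then show ?thesis by (rule tendsto_eventually)
  next
    case False
    have "eventually (\<lambda>k. p \<notin> L k \<inter> voronoi_cell (Y k) (W k) i) sequentially"
    proof (cases "p \<in> K")
      case True
      then have "p \<notin> voronoi_cell x w i" using False by blast
      from ev_notin_cell[OF Y W this] show ?thesis by (rule eventually_mono) auto
    next
      case pK: False
      obtain c where c: "c > 0" "\<forall>L. bounded L \<longrightarrow> hausdorff_dist L K < c \<longrightarrow> p \<notin> L"
        using hd_outside[OF convex_body_closed[OF K] convex_body_ne[OF K] pK] by blast
      from H[OF c(1)] show ?thesis
        by (rule eventually_mono) (use c(2) convex_body_bounded[OF L] in blast)
    qed
    then have "eventually (\<lambda>k. indicator (L k \<inter> voronoi_cell (Y k) (W k) i) p = (indicator (K \<inter> voronoi_cell x w i) p :: real)) sequentially"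
      by eventually_elim (use False in auto)
    then show ?thesis by (rule tendsto_eventually)
  qed
  have meas: "A \<in> sets \<mu>" if "closed A" for A using that P(2) borel_closed by simp
  have clo: "closed (L k \<inter> voronoi_cell (Y k) (W k) i)" for k
    by (intro closed_Int convex_body_closed[OF L] closed_voronoi)
  have clo2: "closed (K \<inter> voronoi_cell x w i)"
    by (intro closed_Int convex_body_closed[OF K] closed_voronoi)
  interpret prob_space \<mu> by (rule P(1))
  have "(\<lambda>k. integral\<^sup>L \<mu> (indicator (L k \<inter> voronoi_cell (Y k) (W k) i))) \<longlonglongrightarrow> integral\<^sup>L \<mu> (indicator (K \<inter> voronoi_cell x w i) :: 'a \<Rightarrow> real)"
  proof (rule integral_dominated_convergence[where w = "\<lambda>_. 1"])
    show "indicator (K \<inter> voronoi_cell x w i) \<in> borel_measurable \<mu>"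
      by (intro borel_measurable_indicator meas clo2)
    show "indicator (L k \<inter> voronoi_cell (Y k) (W k) i) \<in> borel_measurable \<mu>" for k
      by (intro borel_measurable_indicator meas clo)
    show "integrable \<mu> (\<lambda>_. 1::real)" by simp
    show "AE p in \<mu>. (\<lambda>k. indicator (L k \<inter> voronoi_cell (Y k) (W k) i) p) \<longlonglongrightarrow> (indicator (K \<inter> voronoi_cell x w i) p :: real)"
      by (rule AE_I'[OF N]) (use conv in blast)
    show "AE p in \<mu>. norm (indicator (L k \<inter> voronoi_cell (Y k) (W k) i) p :: real) \<le> 1" for k
      by (rule AE_I2) (simp add: indicator_def)
  qed
  then show ?thesis by (simp add: sp)
qed



lemma interior_strict:
  assumes x: "x \<in> conf_space" and ne: "interior (K \<inter> voronoi_cell x w i) \<noteq> {}"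
  shows "\<exists>p. p \<in> interior K \<inter> strict_cell x w i"
proof -
  let ?U = "interior (K \<inter> voronoi_cell x w i)"
  let ?H = "\<Union>j\<in>UNIV-{i}. hyp x w i j"
  have "\<not> ?U \<subseteq> ?H"
  proof
    assume "?U \<subseteq> ?H"
    hence "negligible ?U" using negligible_subset negligible_hyps[OF x] by blast
    thus False using open_not_negligible[OF open_interior ne] by blast
  qed
  then obtain p where p: "p \<in> ?U" "p \<notin> ?H" by blast
  have "p \<in> interior K" using p(1) interior_mono[of "K \<inter> voronoi_cell x w i" K] by blast
  moreover have "p \<in> voronoi_cell x w i" using p(1) interior_subset by blast
  ultimately show ?thesis using p(2) cell_minus_strict[of x w i] by blast
qed

lemma strict_interior:
  assumes "p \<in> interior K \<inter> strict_cell x w i"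
  shows "interior (K \<inter> voronoi_cell x w i) \<noteq> {}"
proof -
  have "interior K \<inter> strict_cell x w i \<subseteq> interior (K \<inter> voronoi_cell x w i)"
    by (rule interior_maximal) (use interior_subset strict_sub in blast, intro open_Int open_interior open_strict_cell)
  thus ?thesis using assms by blast
qed

lemma weight_bound:
  fixes w :: "real ^ 'n::finite" and y :: "'a::euclidean_space ^ 'n" and R :: real
  assumes W: "w \<in> W_space" and C: "\<And>i. \<exists>p\<in>L. p \<in> voronoi_cell y w i"
    and R: "\<And>p. p \<in> L \<Longrightarrow> norm p \<le> R" "\<And>i. norm (y$i) \<le> R"
  shows "norm w \<le> CARD('n) * (2*R)\<^sup>2"
proof -
  define M where "M = (2*R)\<^sup>2"
  have d: "w$j - w$i \<le> M" for i j
  proof -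
    obtain p where p: "p \<in> L" "p \<in> voronoi_cell y w i" using C by blast
    have "(norm (p - y$i))\<^sup>2 - w$i \<le> (norm (p - y$j))\<^sup>2 - w$j" using p(2) unfolding voronoi_cell_def by blast
    hence "w$j - w$i \<le> (norm (p - y$j))\<^sup>2" by (smt (verit) zero_le_power2)
    also have "\<dots> \<le> (2*R)\<^sup>2"
    proof (rule power_mono)
      show "norm (p - y$j) \<le> 2*R" using R(1)[OF p(1)] R(2)[of j] norm_triangle_ineq4[of p "y$j"] by linarith
    qed simp
    finally show ?thesis by (simp add: M_def)
  qed
  have s0: "(\<Sum>i\<in>UNIV. w$i) = 0" using W unfolding W_space_def by simp
  have cw: "real CARD('n) * w$j = (\<Sum>i\<in>UNIV. w$j - w$i)" for j
    by (simp add: sum_subtractf s0)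
  have ab: "\<bar>w$j\<bar> \<le> M" for j
  proof -
    have "real CARD('n) * w$j \<le> real CARD('n) * M"
      unfolding cw using sum_bounded_above[of UNIV "\<lambda>i. w$j - w$i" M] d by simp
    moreover have "real CARD('n) * (- M) \<le> real CARD('n) * w$j"
      unfolding cw using sum_bounded_below[of UNIV "-M" "\<lambda>i. w$j - w$i"] d[of j] by (smt (verit, best) d)
    moreover have c: "real CARD('n) > 0" by simp
    ultimately have "w$j \<le> M" "-M \<le> w$j" by (simp_all only: mult_le_cancel_left_pos)
    thus ?thesis by (simp add: abs_le_iff)
  qed
  have "norm w \<le> (\<Sum>i\<in>UNIV. \<bar>w$i\<bar>)" by (rule norm_le_l1_cart)
  also have "\<dots> \<le> CARD('n) * M" using sum_bounded_above[of UNIV "\<lambda>i. \<bar>w$i\<bar>" M] ab by simp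
  finally show ?thesis by (simp add: M_def)
qed

lemma perm_act_nth: "perm_act \<sigma> x $ i = x $ inv \<sigma> i"
  by (simp add: perm_act_def)

lemma perm_cell:
  assumes "\<sigma> permutes UNIV"
  shows "voronoi_cell (perm_act \<sigma> x) (perm_act \<sigma> w) i = voronoi_cell x w (inv \<sigma> i)"
proof -
  have s: "inv \<sigma> (\<sigma> j) = j" for j by (rule permutes_inverses(2)[OF assms])
  show ?thesis
    unfolding voronoi_cell_def by (auto simp: perm_act_nth, metis s)
qed

lemma perm_conf:
  assumes "\<sigma> permutes UNIV" "x \<in> conf_space"
  shows "perm_act \<sigma> x \<in> conf_space"
proof -
  have "inj (inv \<sigma>)" using assms(1) permutes_inj permutes_inv by blast
  thus ?thesis using assms(2) unfolding conf_space_def by (auto simp: perm_act_nth dest: injD)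
qed

lemma perm_W:
  assumes "\<sigma> permutes UNIV" "w \<in> W_space"
  shows "perm_act \<sigma> w \<in> W_space"
proof -
  have "(\<Sum>i\<in>UNIV. w $ inv \<sigma> i) = (\<Sum>i\<in>UNIV. w $ i)"
    using sum.permute[OF permutes_inv[OF assms(1)], of "\<lambda>i. w $ i"] by (simp add: comp_def)
  moreover have "(\<Sum>i\<in>UNIV. perm_act \<sigma> w $ i) = (\<Sum>i\<in>UNIV. w $ inv \<sigma> i)"
    by (rule sum.cong[OF refl perm_act_nth])
  ultimately show ?thesis using assms(2) unfolding W_space_def by simp
qed

lemma perm_equip:
  assumes "\<sigma> permutes UNIV" "equipartition_weight \<mu> K x w"
  shows "equipartition_weight \<mu> K (perm_act \<sigma> x) (perm_act \<sigma> w)"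
  using assms perm_W unfolding equipartition_weight_def perm_cell[OF assms(1)] by blast



lemma convex_body_cell:
  assumes "convex_body K" "interior (K \<inter> voronoi_cell x w i) \<noteq> {}"
  shows "convex_body (K \<inter> voronoi_cell x w i)"
  using assms unfolding convex_body_def
  by (auto intro: compact_Int_closed closed_voronoi convex_Int convex_voronoi)

lemma mu_pos:
  fixes \<mu> :: "'a::euclidean_space measure" and x :: "'a ^ 'n::finite" and a b :: 'n
  assumes P: "prob_space \<mu>" "sets \<mu> = sets borel"
    and SF: "\<And>K (x :: 'a ^ 'n). convex_body K \<Longrightarrow> x \<in> conf_space \<Longrightarrow> \<exists>!w. equipartition_weight \<mu> K x w"
    and x: "x \<in> conf_space" and K: "convex_body K" and ab: "a \<noteq> b"
  shows "measure \<mu> K > 0"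
proof (rule ccontr)
  assume "\<not> measure \<mu> K > 0"
  hence mK: "measure \<mu> K = 0" using measure_nonneg[of \<mu> K] by linarith
  interpret prob_space \<mu> by (rule P(1))
  obtain w where w: "equipartition_weight \<mu> K x w" using SF[OF K x] by blast
  have "\<forall>i. \<exists>p. p \<in> interior K \<inter> strict_cell x w i"
    using w interior_strict[OF x] unfolding equipartition_weight_def convex_body_def by blast
  then obtain p where p: "\<And>i. p i \<in> interior K \<inter> strict_cell x w i" by metis
  define v :: "real ^ 'n" where "v = axis a 1 - axis b 1"
  define w' where "w' t = w + t *\<^sub>R v" for t :: real
  have ev1: "eventually (\<lambda>t. (norm (p i - x$i))\<^sup>2 - w' t $ i - ((norm (p i - x$j))\<^sup>2 - w' t $ j) < 0) (at_right 0)"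
    if "j \<noteq> i" for i j
  proof -
    have lim: "((\<lambda>t. (norm (p i - x$i))\<^sup>2 - w' t $ i - ((norm (p i - x$j))\<^sup>2 - w' t $ j)) \<longlongrightarrow>
        (norm (p i - x$i))\<^sup>2 - w $ i - ((norm (p i - x$j))\<^sup>2 - w $ j)) (at_right 0)"
      unfolding w'_def by (auto intro!: tendsto_eq_intros)
    have "(norm (p i - x$i))\<^sup>2 - w $ i - ((norm (p i - x$j))\<^sup>2 - w $ j) < 0"
      using p[of i] that unfolding strict_cell_def by auto
    from order_tendstoD(2)[OF lim this] show ?thesis .
  qed
  have "eventually (\<lambda>t. \<forall>i. \<forall>j. j \<noteq> i \<longrightarrow> (norm (p i - x$i))\<^sup>2 - w' t $ i - ((norm (p i - x$j))\<^sup>2 - w' t $ j) < 0) (at_right 0)"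
  proof (intro eventually_all_finite)
    fix i j
    show "eventually (\<lambda>t. j \<noteq> i \<longrightarrow> (norm (p i - x$i))\<^sup>2 - w' t $ i - ((norm (p i - x$j))\<^sup>2 - w' t $ j) < 0) (at_right 0)"
    proof (cases "j = i")
      case False
      from ev1[OF False] show ?thesis by (rule eventually_mono) simp
    qed simp
  qed
  moreover have "eventually (\<lambda>t::real. t > 0) (at_right 0)" by (simp add: eventually_at_right_less)
  ultimately have "eventually (\<lambda>t. t > 0 \<and> (\<forall>i. \<forall>j. j \<noteq> i \<longrightarrow> (norm (p i - x$i))\<^sup>2 - w' t $ i - ((norm (p i - x$j))\<^sup>2 - w' t $ j) < 0)) (at_right 0)"
    by (rule eventually_conj[OF _ _, rotated]) 
  from eventually_happens[OF this] obtain t where t: "t > 0"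
    "\<And>i j. j \<noteq> i \<Longrightarrow> (norm (p i - x$i))\<^sup>2 - w' t $ i - ((norm (p i - x$j))\<^sup>2 - w' t $ j) < 0"
    by (auto simp: trivial_limit_at_right_real)
  have strict': "p i \<in> interior K \<inter> strict_cell x (w' t) i" for i
    using p[of i] t(2)[of _ i] unfolding strict_cell_def by auto
  have wW: "w \<in> W_space" using w unfolding equipartition_weight_def by blast
  have "w' t \<in> W_space"
    using wW unfolding W_space_def w'_def v_def by (simp add: sum.distrib sum_subtractf axis_def ab sum_distrib_left[symmetric])
  moreover have "convex_body (K \<inter> voronoi_cell x (w' t) i)" for i
    by (rule convex_body_cell[OF K strict_interior[OF strict']])
  moreover have "measure \<mu> (K \<inter> voronoi_cell x (w' t) i) = 0" for i
  proof -
    have "K \<in> sets \<mu>" using P(2) borel_closed convex_body_closed[OF K] by simp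
    hence "measure \<mu> (K \<inter> voronoi_cell x (w' t) i) \<le> measure \<mu> K"
      by (intro finite_measure_mono) auto
    thus ?thesis using mK measure_nonneg[of \<mu> "K \<inter> voronoi_cell x (w' t) i"] by linarith
  qed
  ultimately have "equipartition_weight \<mu> K x (w' t)" unfolding equipartition_weight_def by simp
  with w SF[OF K x] have "w' t = w" by blast
  moreover have "w' t $ a \<noteq> w $ a" using t(1) ab by (simp add: w'_def v_def axis_def)
  ultimately show False by simp
qed



theorem lemma6p5:
  fixes \<mu> :: "'a::euclidean_space measure"
    and dummy :: "'n::finite"
  assumes "prob_space \<mu>"
    and "sets \<mu> = sets borel"
    and "absolutely_continuous lborel \<mu>"
    and standing_fact: "\<And>K (x :: 'a ^ 'n). convex_body K \<Longrightarrow> x \<in> conf_space \<Longrightarrow>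
           \<exists>!w. equipartition_weight \<mu> K x w"
  shows "(\<forall>(x :: 'a ^ 'n) \<in> conf_space. \<forall>K. convex_body K \<longrightarrow>
            (\<forall>\<epsilon>>0. \<exists>\<delta>>0. \<forall>y \<in> conf_space. \<forall>L. convex_body L \<longrightarrow>
               dist y x < \<delta> \<longrightarrow> hausdorff_dist L K < \<delta> \<longrightarrow>
               dist (wK \<mu> L y) (wK \<mu> K x) < \<epsilon>))
       \<and> (\<forall>(x :: 'a ^ 'n) \<in> conf_space. \<forall>K. convex_body K \<longrightarrow> wK \<mu> K x \<in> W_space)
       \<and> (\<forall>\<sigma> (x :: 'a ^ 'n) K. \<sigma> permutes UNIV \<longrightarrow> x \<in> conf_space \<longrightarrow> convex_body K \<longrightarrow>
            wK \<mu> K (perm_act \<sigma> x) = perm_act \<sigma> (wK \<mu> K x))"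
proof -
  note P = assms(1-3)
  have eq: "equipartition_weight \<mu> K x (wK \<mu> K x)" if "convex_body K" "x \<in> conf_space" for K and x :: "'a ^ 'n"
    unfolding wK_def by (rule theI'[OF standing_fact[OF that]])
  have uniq: "wK \<mu> K x = w" if "convex_body K" "x \<in> conf_space" "equipartition_weight \<mu> K x w"
    for K w and x :: "'a ^ 'n"
    using eq[OF that(1,2)] that(3) standing_fact[OF that(1,2)] by blast
  have partW: "\<forall>(x :: 'a ^ 'n) \<in> conf_space. \<forall>K. convex_body K \<longrightarrow> wK \<mu> K x \<in> W_space"
    using eq unfolding equipartition_weight_def by blast
  have partS: "\<forall>\<sigma> (x :: 'a ^ 'n) K. \<sigma> permutes UNIV \<longrightarrow> x \<in> conf_space \<longrightarrow> convex_body K \<longrightarrow>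
            wK \<mu> K (perm_act \<sigma> x) = perm_act \<sigma> (wK \<mu> K x)"
  proof (intro allI impI)
    fix \<sigma> :: "'n \<Rightarrow> 'n" and K :: "'a set" and x :: "'a ^ 'n"
    assume s: "\<sigma> permutes UNIV" and x: "x \<in> conf_space" and K: "convex_body K"
    show "wK \<mu> K (perm_act \<sigma> x) = perm_act \<sigma> (wK \<mu> K x)"
      by (rule uniq[OF K perm_conf[OF s x] perm_equip[OF s eq[OF K x]]])
  qed
  have partC: "\<forall>(x :: 'a ^ 'n) \<in> conf_space. \<forall>K. convex_body K \<longrightarrow>
            (\<forall>\<epsilon>>0. \<exists>\<delta>>0. \<forall>y \<in> conf_space. \<forall>L. convex_body L \<longrightarrow>
               dist y x < \<delta> \<longrightarrow> hausdorff_dist L K < \<delta> \<longrightarrow>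
               dist (wK \<mu> L y) (wK \<mu> K x) < \<epsilon>)"
  proof (intro ballI allI impI)
    fix x :: "'a ^ 'n" and K :: "'a set" and \<epsilon> :: real
    assume x: "x \<in> conf_space" and K: "convex_body K" and e: "\<epsilon> > 0"
    show "\<exists>\<delta>>0. \<forall>y \<in> conf_space. \<forall>L. convex_body L \<longrightarrow>
               dist y x < \<delta> \<longrightarrow> hausdorff_dist L K < \<delta> \<longrightarrow>
               dist (wK \<mu> L y) (wK \<mu> K x) < \<epsilon>"
    proof (cases "\<exists>a b :: 'n. a \<noteq> b")
      case False
      have zero: "w = 0" if "w \<in> W_space" for w :: "real ^ 'n"
      proof -
        have "w $ i = 0" for i
        proof -
          have "UNIV = {i}" using False by blast
          moreover have "(\<Sum>j\<in>{i}. w $ j) = w $ i" by simp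
          ultimately have "(\<Sum>j\<in>UNIV. w $ j) = w $ i" by simp
          then show ?thesis using that unfolding W_space_def by simp
        qed
        then show ?thesis by (simp add: vec_eq_iff)
      qed
      show ?thesis
      proof (intro exI[of _ 1] conjI ballI allI impI)
        fix y :: "'a ^ 'n" and L :: "'a set"
        assume "y \<in> conf_space" "convex_body L"
        then have "wK \<mu> L y = 0" using zero partW by blast
        moreover have "wK \<mu> K x = 0" using zero partW x K by blast
        ultimately show "dist (wK \<mu> L y) (wK \<mu> K x) < \<epsilon>" using e by simp
      qed simp
    next
      case True
      then obtain a b :: 'n where ab: "a \<noteq> b" by blast
      show ?thesis
      proof (rule ccontr)
        assume neg: "\<not> ?thesis"
        have "\<forall>k::nat. \<exists>y L. y \<in> conf_space \<and> convex_body L \<and> dist y x < 1 / real (Suc k) \<and>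
            hausdorff_dist L K < 1 / real (Suc k) \<and> \<not> dist (wK \<mu> L y) (wK \<mu> K x) < \<epsilon>"
        proof
          fix k :: nat
          have "1 / real (Suc k) > 0" by simp
          then show "\<exists>y L. y \<in> conf_space \<and> convex_body L \<and> dist y x < 1 / real (Suc k) \<and>
            hausdorff_dist L K < 1 / real (Suc k) \<and> \<not> dist (wK \<mu> L y) (wK \<mu> K x) < \<epsilon>"
            using neg by blast
        qed
        then obtain Y LL where YL: "\<And>k. Y k \<in> conf_space" "\<And>k. convex_body (LL k)"
          "\<And>k. dist (Y k) x < 1 / real (Suc k)" "\<And>k. hausdorff_dist (LL k) K < 1 / real (Suc k)"
          "\<And>k. \<not> dist (wK \<mu> (LL k) (Y k)) (wK \<mu> K x) < \<epsilon>"
          by metis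
        define Wk where "Wk k = wK \<mu> (LL k) (Y k)" for k
        have eqk: "equipartition_weight \<mu> (LL k) (Y k) (Wk k)" for k
          unfolding Wk_def by (rule eq[OF YL(2) YL(1)])
        have le1: "1 / real (Suc k) \<le> 1" for k by simp
        obtain B where B: "\<And>q. q \<in> K \<Longrightarrow> norm q \<le> B"
          using convex_body_bounded[OF K] bounded_iff by metis
        define R where "R = max (B + 1) (norm x + 1)"
        have bnd: "norm (Wk k) \<le> CARD('n) * (2*R)\<^sup>2" for k
        proof (rule weight_bound)
          show "Wk k \<in> W_space" using eqk[of k] unfolding equipartition_weight_def by blast
          show "\<exists>p\<in>LL k. p \<in> voronoi_cell (Y k) (Wk k) i" for i
          proof -
            have "convex_body (LL k \<inter> voronoi_cell (Y k) (Wk k) i)"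
              using eqk[of k] unfolding equipartition_weight_def by blast
            then show ?thesis using convex_body_ne by blast
          qed
          show "norm p \<le> R" if pL: "p \<in> LL k" for p
          proof -
            have "hausdorff_dist (LL k) K < 1" using YL(4)[of k] le1[of k] by linarith
            then obtain q where "q \<in> K" "dist p q < 1"
              using hd_close[OF convex_body_bounded[OF YL(2)] convex_body_ne[OF K] pL] by blast
            then have "norm p \<le> B + 1" using B[of q] norm_triangle_ineq2[of p q]
              by (simp add: dist_norm)
            then show ?thesis unfolding R_def by linarith
          qed
          show "norm (Y k $ i) \<le> R" for i
          proof -
            have "norm (Y k $ i) \<le> norm (Y k)" by (rule Finite_Cartesian_Product.norm_nth_le)
            also have "\<dots> \<le> norm x + dist (Y k) x" using norm_triangle_ineq2[of "Y k" x]
              by (simp add: dist_norm)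
            also have "\<dots> \<le> norm x + 1" using YL(3)[of k] le1[of k] by linarith
            finally show ?thesis unfolding R_def by linarith
          qed
        qed
        have "bounded (range Wk)" unfolding bounded_iff using bnd by blast
        then obtain l r where r: "strict_mono r" and lim: "(Wk \<circ> r) \<longlonglongrightarrow> l"
          using bounded_imp_convergent_subsequence by blast
        have Ylim: "Y \<longlonglongrightarrow> x"
        proof -
          have "(\<lambda>k. dist (Y k) x) \<longlonglongrightarrow> 0"
          proof (rule tendsto_sandwich[of "\<lambda>_. 0" _ _ "\<lambda>k. 1 / real (Suc k)"])
            show "\<forall>\<^sub>F n in sequentially. 0 \<le> dist (Y n) x" by simp
            show "\<forall>\<^sub>F n in sequentially. dist (Y n) x \<le> 1 / real (Suc n)"
              using YL(3) less_imp_le by (simp add: less_imp_le)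
            show "(\<lambda>k. 1 / real (Suc k)) \<longlonglongrightarrow> 0"
              using LIMSEQ_inverse_real_of_nat by (simp add: inverse_eq_divide)
          qed simp
          then show ?thesis using tendsto_dist_iff by blast
        qed
        have Yr: "(\<lambda>k. Y (r k)) \<longlonglongrightarrow> x" using LIMSEQ_subseq_LIMSEQ[OF Ylim r] by (simp add: comp_def)
        have Wr: "(\<lambda>k. Wk (r k)) \<longlonglongrightarrow> l" using lim by (simp add: comp_def)
        have H: "eventually (\<lambda>k. hausdorff_dist (LL (r k)) K < c) sequentially" if c: "c > 0" for c
        proof -
          obtain N where N: "inverse (real (Suc N)) < c" using reals_Archimedean[OF c] by blast
          show ?thesis unfolding eventually_sequentially
          proof (intro exI allI impI)
            fix k assume "N \<le> k"
            then have "N \<le> r k" using seq_suble[OF r, of k] by linarith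
            then have "1 / real (Suc (r k)) \<le> 1 / real (Suc N)"
              by (intro divide_left_mono) auto
            then show "hausdorff_dist (LL (r k)) K < c"
              using YL(4)[of "r k"] N by (simp add: inverse_eq_divide)
          qed
        qed
        have MC: "(\<lambda>k. measure \<mu> (LL (r k) \<inter> voronoi_cell (Y (r k)) (Wk (r k)) i)) \<longlonglongrightarrow> measure \<mu> (K \<inter> voronoi_cell x l i)" for i
          by (rule measure_conv[OF P x K YL(2) Yr Wr H])
        have meq: "measure \<mu> (K \<inter> voronoi_cell x l i) = measure \<mu> (K \<inter> voronoi_cell x l j)" for i j
        proof -
          have "(\<lambda>k. measure \<mu> (LL (r k) \<inter> voronoi_cell (Y (r k)) (Wk (r k)) i)) =
                (\<lambda>k. measure \<mu> (LL (r k) \<inter> voronoi_cell (Y (r k)) (Wk (r k)) j))"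
            using eqk unfolding equipartition_weight_def by blast
          then show ?thesis using LIMSEQ_unique[OF MC[of i], of "measure \<mu> (K \<inter> voronoi_cell x l j)"] MC[of j] by simp
        qed
        have lW: "l \<in> W_space"
        proof -
          have "(\<lambda>k. \<Sum>i\<in>UNIV. Wk (r k) $ i) \<longlonglongrightarrow> (\<Sum>i\<in>UNIV. l $ i)"
            by (intro tendsto_intros Wr)
          moreover have "(\<lambda>k. \<Sum>i\<in>UNIV. Wk (r k) $ i) = (\<lambda>k. 0)"
            using eqk unfolding equipartition_weight_def W_space_def by simp
          ultimately have "(\<lambda>k. 0::real) \<longlonglongrightarrow> (\<Sum>i\<in>UNIV. l $ i)" by simp
          then have "(\<Sum>i\<in>UNIV. l $ i) = 0" by (simp add: LIMSEQ_const_iff)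
          then show ?thesis unfolding W_space_def by simp
        qed
        have mK: "measure \<mu> K > 0" by (rule mu_pos[OF P(1,2) standing_fact x K ab])
        have Kcov: "K = (\<Union>i. K \<inter> voronoi_cell x l i)"
        proof (intro set_eqI iffI)
          fix p assume "p \<in> K"
          define f where "f j = (norm (p - x $ j))\<^sup>2 - l $ j" for j
          have "finite (range f)" by simp
          then have "Min (range f) \<in> range f" by (intro Min_in) auto
          then obtain i where i: "Min (range f) = f i" by (rule rangeE)
          have "f i \<le> f j" for j using i Min_le[of "range f" "f j"] by simp
          then have "p \<in> voronoi_cell x l i" unfolding voronoi_cell_def f_def by blast
          then show "p \<in> (\<Union>i. K \<inter> voronoi_cell x l i)" using \<open>p \<in> K\<close> by blast
        qed blast
        have sK: "K \<inter> voronoi_cell x l i \<in> sets \<mu>" for i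
          using P(2) borel_closed[OF closed_Int[OF convex_body_closed[OF K] closed_voronoi]] by simp
        have "measure \<mu> K \<le> (\<Sum>i\<in>UNIV. measure \<mu> (K \<inter> voronoi_cell x l i))"
        proof -
          have "measure \<mu> (\<Union>i\<in>UNIV. K \<inter> voronoi_cell x l i) \<le> (\<Sum>i\<in>UNIV. measure \<mu> (K \<inter> voronoi_cell x l i))"
            by (rule measure_UNION_le) (simp_all add: sK)
          then show ?thesis using Kcov by simp
        qed
        also have "\<dots> = CARD('n) * measure \<mu> (K \<inter> voronoi_cell x l a)"
        proof -
          have "(\<Sum>i\<in>UNIV. measure \<mu> (K \<inter> voronoi_cell x l i)) = (\<Sum>i\<in>(UNIV::'n set). measure \<mu> (K \<inter> voronoi_cell x l a))"
            by (rule sum.cong[OF refl meq])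
          then show ?thesis by simp
        qed
        finally have "CARD('n) * measure \<mu> (K \<inter> voronoi_cell x l a) > 0" using mK by linarith
        then have pos: "measure \<mu> (K \<inter> voronoi_cell x l i) > 0" for i
          using meq[of i a] by (simp add: zero_less_mult_iff)
        have cb: "convex_body (K \<inter> voronoi_cell x l i)" for i
        proof (rule convex_body_cell[OF K])
          show "interior (K \<inter> voronoi_cell x l i) \<noteq> {}"
            by (rule pos_measure_interior[OF P(3) convex_Int[OF convex_body_convex[OF K] convex_voronoi]
                closed_Int[OF convex_body_closed[OF K] closed_voronoi] pos])
        qed
        have "equipartition_weight \<mu> K x l"
          unfolding equipartition_weight_def using lW cb meq by blast
        then have lw: "l = wK \<mu> K x" using uniq[OF K x] by simp
        have "eventually (\<lambda>k. dist (Wk (r k)) (wK \<mu> K x) < \<epsilon>) sequentially"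
          using tendstoD[OF Wr e] lw by simp
        then obtain N where "\<forall>k\<ge>N. dist (Wk (r k)) (wK \<mu> K x) < \<epsilon>"
          unfolding eventually_sequentially by blast
        then have "dist (Wk (r N)) (wK \<mu> K x) < \<epsilon>" by blast
        then show False using YL(5)[of "r N"] unfolding Wk_def by blast
      qed
    qed
  qed
  show ?thesis using partC partW partS by blast
qed

end
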